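(* Let $n\ge1$. For every $\mathbf t\in\Delta_{n-1}$ and every vertex $x\in U_n\cup V_n$, the matrix $\rho_{\mathbf t}(p_x)\in M_{U_n}$ is in $\mathbf t$-block diagonal form.
   Context: For $n\ge1$, identify integers $0\le i<2^n$ with their $n$-digit binary representations $i=\sum_k i_k2^k$; $\mathrm{par}_k(i)=\sum_{r=0}^k i_r\bmod2$, and $i\#k$ is $i$ with its $k$-th digit flipped. The hypercube $Q_n$ has vertex classes $U_n=\{i<2^n\mid\mathrm{par}_{n-1}(i)=0\}$, $V_n=\{j<2^n\mid\mathrm{par}_{n-1}(j)=1\}$, with $i\in U_n$, $j\in V_n$ adjacent iff $j=i\#k$ for some $k<n$. $C^\ast(Q_n)$ is the universal unital C*-algebra generated by projections $p_x$ with $\sum_{u\in U_n}p_u=1=\sum_{v\in V_n}p_v$ and $p_up_v=0$ for non-adjacent $u,v$. $\Delta_{n-1}=\{[t_0,\dots,t_{n-1}]\mid t_k\ge0,\sum t_k=1\}$. For $\mathbf t\in\Delta_{n-1}$: $c_{\mathbf t}(ij)=(-1)^{\mathrm{par}_k(i)}\sqrt{t_k}$ for $i\in U_n$, $j=i\#k$ (and $0$ for non-adjacent $i,j$); $\rho_{\mathbf t}:C^\ast(Q_n)\to M_{U_n}$ is the representation with $\rho_{\mathbf t}(p_i)=E_{ii}$ ($i\in U_n$) and $\rho_{\mathbf t}(p_j)=[c_{\mathbf t}(i_1j)\overline{c_{\mathbf t}(i_2j)}]_{i_1,i_2\in U_n}$ ($j\in V_n$). $Q_n(\mathbf t)$ is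 the graph obtained from $Q_n$ by deleting all edges $ij$ with $j=i\#k$ and $t_k=0$; a matrix $A\in M_{U_n}$ is in $\mathbf t$-block diagonal form if $A_{i_1i_2}=0$ whenever $i_1,i_2$ lie in distinct connected components of $Q_n(\mathbf t)$. *)

theory Defs
  imports Complex_Main
begin

definition digit :: "nat \<Rightarrow> nat \<Rightarrow> nat" where
  "digit i k = i div 2 ^ k mod 2"

definition par :: "nat \<Rightarrow> nat \<Rightarrow> nat" where
  "par k i = (\<Sum>r\<le>k. digit i r) mod 2"

definition flip :: "nat \<Rightarrow> nat \<Rightarrow> nat" where
  "flip i k = (if digit i k = 1 then i - 2 ^ k else i + 2 ^ k)"

definition U :: "nat \<Rightarrow> nat set" where
  "U n = {i. i < 2 ^ n \<and> par (n - 1) i = 0}"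

definition V :: "nat \<Rightarrow> nat set" where
  "V n = {j. j < 2 ^ n \<and> par (n - 1) j = 1}"

text \<open>The simplex Delta_{n-1}, parameters t_0..t_{n-1} as a function on indices < n.\<close>

definition simplex :: "nat \<Rightarrow> (nat \<Rightarrow> real) set" where
  "simplex n = {t. (\<forall>k<n. 0 \<le> t k) \<and> (\<Sum>k<n. t k) = 1}"

definition coef :: "nat \<Rightarrow> (nat \<Rightarrow> real) \<Rightarrow> nat \<Rightarrow> nat \<Rightarrow> complex" where
  "coef n t i j =
     (if i \<in> U n \<and> j \<in> V n \<and> (\<exists>k<n. j = flip i k)
      then (let k = (THE k. k < n \<and> j = flip i k)
            in complex_of_real ((-1) ^ par k i * sqrt (t k)))
      else 0)"

text \<open>Matrices in M_{U_n} are functions nat => nat => complex; only entries indexed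
  by U_n x U_n are meaningful.  rho_t(p_x) for a vertex x.\<close>

definition rho :: "nat \<Rightarrow> (nat \<Rightarrow> real) \<Rightarrow> nat \<Rightarrow> nat \<Rightarrow> nat \<Rightarrow> complex" where
  "rho n t x =
     (if x \<in> U n then (\<lambda>i1 i2. if i1 = x \<and> i2 = x then 1 else 0)
      else (\<lambda>i1 i2. coef n t i1 x * cnj (coef n t i2 x)))"

definition edges_t :: "nat \<Rightarrow> (nat \<Rightarrow> real) \<Rightarrow> (nat \<times> nat) set" where
  "edges_t n t = {(a, b). (a \<in> U n \<and> b \<in> V n \<and> (\<exists>k<n. b = flip a k \<and> t k \<noteq> 0))
                        \<or> (b \<in> U n \<and> a \<in> V n \<and> (\<exists>k<n. a = flip b k \<and> t k \<noteq> 0))}"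

definition same_component :: "nat \<Rightarrow> (nat \<Rightarrow> real) \<Rightarrow> nat \<Rightarrow> nat \<Rightarrow> bool" where
  "same_component n t a b \<longleftrightarrow> (a, b) \<in> (edges_t n t)\<^sup>*"

definition block_diag :: "nat \<Rightarrow> (nat \<Rightarrow> real) \<Rightarrow> (nat \<Rightarrow> nat \<Rightarrow> complex) \<Rightarrow> bool" where
  "block_diag n t A \<longleftrightarrow>
     (\<forall>i1\<in>U n. \<forall>i2\<in>U n. \<not> same_component n t i1 i2 \<longrightarrow> A i1 i2 = 0)"

end

theory Submission
  imports Defs
begin

lemma digit_one_le: "digit i k = 1 \<Longrightarrow> 2 ^ k \<le> i"
proof -
  assume "digit i k = 1"
  then have "i div 2 ^ k \<noteq> 0" unfolding digit_def by auto
  then show ?thesis by (simp add: div_eq_0_iff not_less)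
qed

lemma flip_inj: "flip i k = flip i k' \<Longrightarrow> k = k'"
proof -
  assume h: "flip i k = flip i k'"
  have p1: "(0::nat) < 2 ^ k" "(0::nat) < 2 ^ k'" by auto
  have "(2::nat) ^ k = 2 ^ k'"
  proof (cases "digit i k = 1"; cases "digit i k' = 1")
    assume "digit i k = 1" "digit i k' = 1"
    then have "i - 2 ^ k = i - 2 ^ k'" using h unfolding flip_def by simp
    then show ?thesis using digit_one_le[of i k] digit_one_le[of i k'] \<open>digit i k = 1\<close> \<open>digit i k' = 1\<close>
      by linarith
  next
    assume "digit i k = 1" "digit i k' \<noteq> 1"
    then have "i - 2 ^ k = i + 2 ^ k'" using h unfolding flip_def by simp
    then show ?thesis using p1 by linarith
  next
    assume "digit i k \<noteq> 1" "digit i k' = 1"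
    then have "i + 2 ^ k = i - 2 ^ k'" using h unfolding flip_def by simp
    then show ?thesis using p1 by linarith
  next
    assume "digit i k \<noteq> 1" "digit i k' \<noteq> 1"
    then show ?thesis using h unfolding flip_def by simp
  qed
  then show ?thesis by simp
qed

lemma coef_nz:
  assumes "coef n t i x \<noteq> 0"
  shows "i \<in> U n \<and> x \<in> V n \<and> (\<exists>k<n. x = flip i k \<and> t k \<noteq> 0)"
proof -
  have c: "i \<in> U n \<and> x \<in> V n \<and> (\<exists>k<n. x = flip i k)"
    using assms unfolding coef_def by (auto split: if_splits)
  then obtain k where k: "k < n" "x = flip i k" by blast
  have th: "(THE k. k < n \<and> x = flip i k) = k"
    using k flip_inj by (intro the_equality) auto
  have "coef n t i x = complex_of_real ((-1) ^ par k i * sqrt (t k))"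
    unfolding coef_def using c th by (simp add: Let_def)
  with assms have "t k \<noteq> 0" by auto
  with c k show ?thesis by blast
qed

theorem lemma6p3:
  fixes n :: nat and t :: "nat \<Rightarrow> real" and x :: nat
  assumes "1 \<le> n" and "t \<in> simplex n" and "x \<in> U n \<union> V n"
  shows "block_diag n t (rho n t x)"
  unfolding block_diag_def
proof (intro ballI impI)
  fix i1 i2 assume i1: "i1 \<in> U n" and i2: "i2 \<in> U n"
    and ns: "\<not> same_component n t i1 i2"
  show "rho n t x i1 i2 = 0"
  proof (cases "x \<in> U n")
    case True
    then show ?thesis using ns unfolding rho_def same_component_def by auto
  next
    case False
    show ?thesis
    proof (rule ccontr)
      assume nz: "rho n t x i1 i2 \<noteq> 0"
      then have "coef n t i1 x \<noteq> 0" "coef n t i2 x \<noteq> 0"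
        using False unfolding rho_def by auto
      then have a: "(i1, x) \<in> edges_t n t" and b: "(x, i2) \<in> edges_t n t"
        using coef_nz[of n t i1 x] coef_nz[of n t i2 x] unfolding edges_t_def by auto
      then have "(i1, i2) \<in> (edges_t n t)\<^sup>*" by auto
      with ns show False unfolding same_component_def by simp
    qed
  qed
qed

end
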